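(* Let $k\ge2$, $0\le\alpha<1$, and let $G$ be a connected $k$-uniform hypergraph on $n$ vertices with $m$ edges, degrees $d_i$ ($i\in V(G)$) and maximum degree $\Delta$. Let $x$ be the $\alpha$-Perron vector of $G$ and $\overline{x}=\max_i x_i$. Then \[\rho_\alpha(G)\le\alpha\Delta+(1-\alpha)km\,\overline{x}^{\,k}\] and \[\rho_\alpha(G)\le\alpha\Delta+(1-\alpha)\Big(\sum_{i\in V(G)}d_i^{\frac{k}{k-1}}\Big)^{\frac{k-1}{k}}\overline{x}^{\,k-1},\] and equality holds in either inequality if and only if $G$ is regular.
   Context: Hypergraphs are finite with edges being sets; $k$-uniform means every edge has $k$ vertices; $d_i$ is the number of edges containing $i$; regular means all degrees equal. $\mathcal A(G)$ is the order-$k$ dimension-$n$ tensor with $(i_1,\dots,i_k)$-entry $\frac1{(k-1)!}$ if $\{i_1,\dots,i_k\}\in E(G)$, $0$ otherwise; $\mathcal D(G)$ is the diagonal tensor with $(i,\dots,i)$-entry $d_i$; $\mathcal A_\alpha(G)=\alpha\mathcal D(G)+(1-\alpha)\mathcal A(G)$. For an order-$k$ tensor $\mathcal T$, $(\mathcal Tx)_i=\sum_{i_2,\dots,i_k}\mathcal T_{ii_2\dots i_k}x_{i_2}\cdots x_{i_k}$; $\lambda$ is an eigenvalue if $\mathcal Tx=\lambda x^{[k-1]}$ for some $x\neq 0$, where $x^{[k-1]}=(x_i^{k-1})_i$. $\rho_\alpha(G)$ is the largest modulus of an eigenvalue of $\mathcal A_\alpha(G)$. A path is an alternating sequence of distinct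 vertices and distinct edges $(v_0,e_1,\dots,e_s,v_s)$ with $v_{i-1},v_i\in e_i$; $G$ is connected if any two vertices are joined by a path. For connected $G$, the $\alpha$-Perron vector of $G$ is the unique vector $x$ with all entries positive, $\sum_i x_i^k=1$, and $\mathcal A_\alpha(G)x=\rho_\alpha(G)x^{[k-1]}$. *)

theory Defs
  imports "HOL-Analysis.Analysis"
begin

definition k_uniform_hypergraph :: "nat \<Rightarrow> 'a set \<Rightarrow> 'a set set \<Rightarrow> bool" where
  "k_uniform_hypergraph k V E \<longleftrightarrow> finite V \<and> (\<forall>e\<in>E. e \<subseteq> V \<and> card e = k)"

definition hg_degree :: "'a set set \<Rightarrow> 'a \<Rightarrow> nat" where
  "hg_degree E i = card {e\<in>E. i \<in> e}"

definition hg_max_degree :: "'a set \<Rightarrow> 'a set set \<Rightarrow> nat" where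
  "hg_max_degree V E = Max (hg_degree E ` V)"

definition hg_regular :: "'a set \<Rightarrow> 'a set set \<Rightarrow> bool" where
  "hg_regular V E \<longleftrightarrow> (\<forall>i\<in>V. \<forall>j\<in>V. hg_degree E i = hg_degree E j)"

definition hg_path :: "'a set set \<Rightarrow> 'a list \<Rightarrow> 'a set list \<Rightarrow> bool" where
  "hg_path E vs es \<longleftrightarrow> length vs = length es + 1 \<and> distinct vs \<and> distinct es \<and>
     (\<forall>i<length es. es ! i \<in> E \<and> vs ! i \<in> es ! i \<and> vs ! (i+1) \<in> es ! i)"

definition hg_connected :: "'a set \<Rightarrow> 'a set set \<Rightarrow> bool" where
  "hg_connected V E \<longleftrightarrow> (\<forall>u\<in>V. \<forall>v\<in>V. \<exists>vs es. hg_path E vs es \<and> hd vs = u \<and> last vs = v)"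

text \<open>Order-k tensors of dimension V: real-valued functions on index lists (only lists of
  length k with entries in V matter).\<close>

definition adj_tensor :: "nat \<Rightarrow> 'a set set \<Rightarrow> 'a list \<Rightarrow> real" where
  "adj_tensor k E is = (if length is = k \<and> set is \<in> E then 1 / fact (k - 1) else 0)"

definition deg_tensor :: "nat \<Rightarrow> 'a set set \<Rightarrow> 'a list \<Rightarrow> real" where
  "deg_tensor k E is = (if length is = k \<and> is \<noteq> [] \<and> (\<forall>j\<in>set is. j = hd is)
      then real (hg_degree E (hd is)) else 0)"

definition A_alpha_tensor :: "real \<Rightarrow> nat \<Rightarrow> 'a set set \<Rightarrow> 'a list \<Rightarrow> real" where
  "A_alpha_tensor \<alpha> k E is = \<alpha> * deg_tensor k E is + (1 - \<alpha>) * adj_tensor k E is"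

definition tensor_apply :: "'a set \<Rightarrow> nat \<Rightarrow> ('a list \<Rightarrow> real) \<Rightarrow> ('a \<Rightarrow> complex) \<Rightarrow> 'a \<Rightarrow> complex" where
  "tensor_apply V k T x i =
     (\<Sum>ys\<in>{ys. set ys \<subseteq> V \<and> length ys = k - 1}. complex_of_real (T (i # ys)) * prod_list (map x ys))"

definition tensor_eigenvalue :: "'a set \<Rightarrow> nat \<Rightarrow> ('a list \<Rightarrow> real) \<Rightarrow> complex \<Rightarrow> bool" where
  "tensor_eigenvalue V k T \<mu> \<longleftrightarrow>
     (\<exists>x. (\<exists>i\<in>V. x i \<noteq> 0) \<and> (\<forall>i\<in>V. tensor_apply V k T x i = \<mu> * x i ^ (k - 1)))"

definition tensor_spectral_radius :: "'a set \<Rightarrow> nat \<Rightarrow> ('a list \<Rightarrow> real) \<Rightarrow> real" where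
  "tensor_spectral_radius V k T = Sup {cmod \<mu> | \<mu>. tensor_eigenvalue V k T \<mu>}"

definition rho_alpha :: "real \<Rightarrow> nat \<Rightarrow> 'a set \<Rightarrow> 'a set set \<Rightarrow> real" where
  "rho_alpha \<alpha> k V E = tensor_spectral_radius V k (A_alpha_tensor \<alpha> k E)"

definition alpha_perron_vector :: "real \<Rightarrow> nat \<Rightarrow> 'a set \<Rightarrow> 'a set set \<Rightarrow> ('a \<Rightarrow> real) \<Rightarrow> bool" where
  "alpha_perron_vector \<alpha> k V E x \<longleftrightarrow>
     (\<forall>i\<in>V. x i > 0) \<and> (\<Sum>i\<in>V. x i ^ k) = 1 \<and>
     (\<forall>i\<in>V. tensor_apply V k (A_alpha_tensor \<alpha> k E) (\<lambda>j. complex_of_real (x j)) i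
               = complex_of_real (rho_alpha \<alpha> k V E * x i ^ (k - 1)))"

end

theory Submission
  imports Defs "HOL-Combinatorics.Multiset_Permutations"
begin


lemma prod_list_of_real: "prod_list (map (\<lambda>j. complex_of_real (x j)) ys) = complex_of_real (prod_list (map x ys))"
  by (induction ys) auto

lemma tensor_apply_real:
  "tensor_apply V k T (\<lambda>j. complex_of_real (x j)) i =
   complex_of_real (\<Sum>ys\<in>{ys. set ys \<subseteq> V \<and> length ys = k - 1}. T (i # ys) * prod_list (map x ys))"
  unfolding tensor_apply_def by (simp add: prod_list_of_real)

lemma deg_part:
  assumes "finite V" "i \<in> V" "k \<ge> 1"
  shows "(\<Sum>ys\<in>{ys. set ys \<subseteq> V \<and> length ys = k - 1}. deg_tensor k E (i # ys) * prod_list (map x ys))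
     = real (hg_degree E i) * x i ^ (k - 1)"
proof -
  let ?L = "{ys. set ys \<subseteq> V \<and> length ys = k - 1}"
  let ?r = "replicate (k - 1) i"
  have "\<And>ys. ys \<in> ?L \<Longrightarrow> deg_tensor k E (i # ys) * prod_list (map x ys)
     = (if ys = ?r then real (hg_degree E i) * x i ^ (k - 1) else 0)"
  proof -
    fix ys assume "ys \<in> ?L"
    hence len: "length ys = k - 1" by auto
    have "(\<forall>j\<in>set ys. j = i) \<longleftrightarrow> ys = ?r"
      using len by (metis in_set_replicate replicate_eqI)
    thus "deg_tensor k E (i # ys) * prod_list (map x ys)
     = (if ys = ?r then real (hg_degree E i) * x i ^ (k - 1) else 0)"
      unfolding deg_tensor_def using len assms(3) by (auto simp: prod_list_replicate)
  qed
  hence "(\<Sum>ys\<in>?L. deg_tensor k E (i # ys) * prod_list (map x ys))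
      = (\<Sum>ys\<in>?L. if ys = ?r then real (hg_degree E i) * x i ^ (k - 1) else 0)"
    by (rule sum.cong[OF refl])
  also have "\<dots> = real (hg_degree E i) * x i ^ (k - 1)"
  proof -
    have "?r \<in> ?L" using assms by auto
    moreover have "finite ?L" using assms(1) by (simp add: finite_lists_length_eq)
    ultimately show ?thesis by simp
  qed
  finally show ?thesis .
qed

lemma adj_part:
  assumes hg: "k_uniform_hypergraph k V E" and i: "i \<in> V" and k: "k \<ge> 1"
  shows "(\<Sum>ys\<in>{ys. set ys \<subseteq> V \<and> length ys = k - 1}. adj_tensor k E (i # ys) * prod_list (map x ys))
     = (\<Sum>e\<in>{e\<in>E. i \<in> e}. prod x (e - {i}))"
proof -
  let ?L = "{ys. set ys \<subseteq> V \<and> length ys = k - 1}"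
  let ?Ei = "{e\<in>E. i \<in> e}"
  let ?c = "1 / fact (k - 1) :: real"
  have finV: "finite V" and Esub: "\<And>e. e \<in> E \<Longrightarrow> e \<subseteq> V \<and> card e = k"
    using hg unfolding k_uniform_hypergraph_def by auto
  have finE: "finite E" using Esub finV
    by (intro finite_subset[of E "Pow V"]) auto
  have finL: "finite ?L" using finV by (simp add: finite_lists_length_eq)
  have "(\<Sum>ys\<in>?L. adj_tensor k E (i # ys) * prod_list (map x ys))
      = (\<Sum>ys\<in>?L. if set (i # ys) \<in> E then ?c * prod_list (map x ys) else 0)"
    using k by (intro sum.cong[OF refl]) (auto simp: adj_tensor_def)
  also have "\<dots> = (\<Sum>ys\<in>{ys\<in>?L. set (i # ys) \<in> E}. ?c * prod_list (map x ys))"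
    by (rule sum.inter_filter[OF finL, symmetric])
  also have "{ys\<in>?L. set (i # ys) \<in> E} = (\<Union>e\<in>?Ei. permutations_of_set (e - {i}))"
  proof (intro equalityI subsetI)
    fix ys assume "ys \<in> {ys\<in>?L. set (i # ys) \<in> E}"
    hence ys: "set ys \<subseteq> V" "length ys = k - 1" "set (i # ys) \<in> E" by auto
    have "card (set (i # ys)) = length (i # ys)" using Esub[OF ys(3)] ys(2) k by simp
    hence "distinct (i # ys)" by (rule card_distinct)
    hence "ys \<in> permutations_of_set (set (i # ys) - {i})"
      unfolding permutations_of_set_def by auto
    thus "ys \<in> (\<Union>e\<in>?Ei. permutations_of_set (e - {i}))" using ys(3) by auto
  next
    fix ys assume "ys \<in> (\<Union>e\<in>?Ei. permutations_of_set (e - {i}))"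
    then obtain e where e: "e \<in> E" "i \<in> e" "set ys = e - {i}" "distinct ys"
      unfolding permutations_of_set_def by auto
    have "length ys = card (e - {i})" using e(3,4) distinct_card by metis
    also have "\<dots> = k - 1" using Esub[OF e(1)] e(2) finV
      by (simp add: card_Diff_singleton_if)
    finally have "length ys = k - 1" .
    moreover have "set (i # ys) = e" using e by auto
    ultimately show "ys \<in> {ys\<in>?L. set (i # ys) \<in> E}" using e Esub[OF e(1)] by auto
  qed
  also have "(\<Sum>ys\<in>(\<Union>e\<in>?Ei. permutations_of_set (e - {i})). ?c * prod_list (map x ys))
     = (\<Sum>e\<in>?Ei. \<Sum>ys\<in>permutations_of_set (e - {i}). ?c * prod_list (map x ys))"
  proof (rule sum.UNION_disjoint)
    show "finite ?Ei" using finE by simp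
    show "\<forall>e\<in>?Ei. finite (permutations_of_set (e - {i}))" by simp
    show "\<forall>e\<in>?Ei. \<forall>e'\<in>?Ei. e \<noteq> e' \<longrightarrow>
        permutations_of_set (e - {i}) \<inter> permutations_of_set (e' - {i}) = {}"
    proof (intro ballI impI)
      fix e e' assume "e \<in> ?Ei" "e' \<in> ?Ei" "e \<noteq> e'"
      hence "e - {i} \<noteq> e' - {i}" by auto
      thus "permutations_of_set (e - {i}) \<inter> permutations_of_set (e' - {i}) = {}"
        unfolding permutations_of_set_def by auto
    qed
  qed
  also have "\<dots> = (\<Sum>e\<in>?Ei. prod x (e - {i}))"
  proof (rule sum.cong[OF refl])
    fix e assume e: "e \<in> ?Ei"
    have fe: "finite (e - {i})" using Esub[of e] e finV finite_subset by blast
    have ce: "card (e - {i}) = k - 1" using Esub[of e] e fe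
      by (simp add: card_Diff_singleton_if)
    have "(\<Sum>ys\<in>permutations_of_set (e - {i}). ?c * prod_list (map x ys))
        = (\<Sum>ys\<in>permutations_of_set (e - {i}). ?c * prod x (e - {i}))"
    proof (rule sum.cong[OF refl])
      fix ys assume "ys \<in> permutations_of_set (e - {i})"
      hence "distinct ys" "set ys = e - {i}" unfolding permutations_of_set_def by auto
      thus "?c * prod_list (map x ys) = ?c * prod x (e - {i})"
        using prod.distinct_set_conv_list[of ys x] by simp
    qed
    also have "\<dots> = real (fact (k - 1)) * (?c * prod x (e - {i}))"
      using fe ce by simp
    also have "\<dots> = prod x (e - {i})" by simp
    finally show "(\<Sum>ys\<in>permutations_of_set (e - {i}). ?c * prod_list (map x ys)) = prod x (e - {i})" .
  qed
  finally show ?thesis .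
qed



lemma eigen_eq:
  assumes k: "k \<ge> 2" and hg: "k_uniform_hypergraph k V E"
    and pv: "alpha_perron_vector \<alpha> k V E x" and i: "i \<in> V"
  shows "rho_alpha \<alpha> k V E * x i ^ (k - 1)
     = \<alpha> * real (hg_degree E i) * x i ^ (k - 1) + (1 - \<alpha>) * (\<Sum>e\<in>{e\<in>E. i \<in> e}. prod x (e - {i}))"
proof -
  let ?L = "{ys. set ys \<subseteq> V \<and> length ys = k - 1}"
  have finV: "finite V" using hg unfolding k_uniform_hypergraph_def by auto
  have "complex_of_real (\<Sum>ys\<in>?L. A_alpha_tensor \<alpha> k E (i # ys) * prod_list (map x ys))
      = complex_of_real (rho_alpha \<alpha> k V E * x i ^ (k - 1))"
    using pv i unfolding alpha_perron_vector_def by (simp add: tensor_apply_real)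
  hence "(\<Sum>ys\<in>?L. A_alpha_tensor \<alpha> k E (i # ys) * prod_list (map x ys)) = rho_alpha \<alpha> k V E * x i ^ (k - 1)"
    using of_real_eq_iff by blast
  moreover have "(\<Sum>ys\<in>?L. A_alpha_tensor \<alpha> k E (i # ys) * prod_list (map x ys))
     = \<alpha> * (\<Sum>ys\<in>?L. deg_tensor k E (i # ys) * prod_list (map x ys))
       + (1 - \<alpha>) * (\<Sum>ys\<in>?L. adj_tensor k E (i # ys) * prod_list (map x ys))"
  proof -
    have "\<And>ys. A_alpha_tensor \<alpha> k E (i # ys) * prod_list (map x ys)
       = \<alpha> * (deg_tensor k E (i # ys) * prod_list (map x ys)) + (1 - \<alpha>) * (adj_tensor k E (i # ys) * prod_list (map x ys))"
      unfolding A_alpha_tensor_def by (simp add: algebra_simps)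
    thus ?thesis by (simp only: sum.distrib sum_distrib_left)
  qed
  moreover have "(\<Sum>ys\<in>?L. deg_tensor k E (i # ys) * prod_list (map x ys)) = real (hg_degree E i) * x i ^ (k - 1)"
    using deg_part[OF finV i, of k E x] k by simp
  moreover have "(\<Sum>ys\<in>?L. adj_tensor k E (i # ys) * prod_list (map x ys)) = (\<Sum>e\<in>{e\<in>E. i \<in> e}. prod x (e - {i}))"
    using adj_part[OF hg i, of x] k by simp
  ultimately show ?thesis by (simp add: algebra_simps)
qed

lemma finite_E: "k_uniform_hypergraph k V E \<Longrightarrow> finite E"
  unfolding k_uniform_hypergraph_def by (intro finite_subset[of E "Pow V"]) auto

lemma S_le:
  assumes hg: "k_uniform_hypergraph k V E" and k: "k \<ge> 1" and i: "i \<in> V"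
    and xb: "\<And>j. j \<in> V \<Longrightarrow> 0 \<le> x j \<and> x j \<le> b"
  shows "(\<Sum>e\<in>{e\<in>E. i \<in> e}. prod x (e - {i})) \<le> real (hg_degree E i) * b ^ (k - 1)"
proof -
  have "(\<Sum>e\<in>{e\<in>E. i \<in> e}. prod x (e - {i})) \<le> (\<Sum>e\<in>{e\<in>E. i \<in> e}. b ^ (k - 1))"
  proof (rule sum_mono)
    fix e assume e: "e \<in> {e\<in>E. i \<in> e}"
    hence sub: "e \<subseteq> V" and ce: "card e = k" using hg unfolding k_uniform_hypergraph_def by auto
    have "prod x (e - {i}) \<le> prod (\<lambda>_. b) (e - {i})"
      using sub xb by (intro prod_mono) auto
    also have "\<dots> = b ^ (k - 1)" using ce e by (simp add: card_Diff_singleton_if)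
    finally show "prod x (e - {i}) \<le> b ^ (k - 1)" .
  qed
  also have "\<dots> = real (hg_degree E i) * b ^ (k - 1)" by (simp add: hg_degree_def)
  finally show ?thesis .
qed

lemma S_ge:
  assumes hg: "k_uniform_hypergraph k V E" and k: "k \<ge> 1" and i: "i \<in> V"
    and xb: "\<And>j. j \<in> V \<Longrightarrow> 0 \<le> b \<and> b \<le> x j"
  shows "(\<Sum>e\<in>{e\<in>E. i \<in> e}. prod x (e - {i})) \<ge> real (hg_degree E i) * b ^ (k - 1)"
proof -
  have "(\<Sum>e\<in>{e\<in>E. i \<in> e}. prod x (e - {i})) \<ge> (\<Sum>e\<in>{e\<in>E. i \<in> e}. b ^ (k - 1))"
  proof (rule sum_mono)
    fix e assume e: "e \<in> {e\<in>E. i \<in> e}"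
    hence sub: "e \<subseteq> V" and ce: "card e = k" using hg unfolding k_uniform_hypergraph_def by auto
    have "prod (\<lambda>_. b) (e - {i}) \<le> prod x (e - {i})"
      using sub xb by (intro prod_mono) auto
    moreover have "prod (\<lambda>_. b) (e - {i}) = b ^ (k - 1)" using ce e by (simp add: card_Diff_singleton_if)
    ultimately show "b ^ (k - 1) \<le> prod x (e - {i})" by simp
  qed
  moreover have "(\<Sum>e\<in>{e\<in>E. i \<in> e}. b ^ (k - 1)) = real (hg_degree E i) * b ^ (k - 1)" by (simp add: hg_degree_def)
  ultimately show ?thesis by linarith
qed

lemma S_eq:
  assumes hg: "k_uniform_hypergraph k V E" and k: "k \<ge> 1" and i: "i \<in> V"
    and xb: "\<And>j. j \<in> V \<Longrightarrow> 0 < x j \<and> x j \<le> b"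
    and eq: "(\<Sum>e\<in>{e\<in>E. i \<in> e}. prod x (e - {i})) = real (hg_degree E i) * b ^ (k - 1)"
    and e: "e \<in> E" "i \<in> e" and j: "j \<in> e" "j \<noteq> i"
  shows "x j = b"
proof (rule ccontr)
  assume ne: "x j \<noteq> b"
  have finE: "finite E" using finite_E[OF hg] .
  have sub: "e \<subseteq> V" and ce: "card e = k" using hg e unfolding k_uniform_hypergraph_def by auto
  have fe: "finite e" using sub hg unfolding k_uniform_hypergraph_def using finite_subset by blast
  have jV: "j \<in> V" using sub j by auto
  have xjb: "x j < b" using xb[OF jV] ne by auto
  have bpos: "b > 0" using xb[OF jV] by linarith
  have "\<forall>e'\<in>{e\<in>E. i \<in> e}. b ^ (k - 1) - prod x (e' - {i}) = 0"
  proof (subst sum_nonneg_eq_0_iff[symmetric])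
    show "finite {e\<in>E. i \<in> e}" using finE by simp
    show "\<And>e'. e' \<in> {e\<in>E. i \<in> e} \<Longrightarrow> 0 \<le> b ^ (k - 1) - prod x (e' - {i})"
    proof -
      fix e' assume "e' \<in> {e\<in>E. i \<in> e}"
      hence "card (e' - {i}) = k - 1" "e' - {i} \<subseteq> V"
        using hg unfolding k_uniform_hypergraph_def by (auto simp: card_Diff_singleton_if)
      moreover have "prod x (e' - {i}) \<le> prod (\<lambda>_. b) (e' - {i})"
        using calculation(2) xb by (intro prod_mono) (auto simp: less_imp_le)
      ultimately show "0 \<le> b ^ (k - 1) - prod x (e' - {i})" by simp
    qed
    show "(\<Sum>e'\<in>{e\<in>E. i \<in> e}. b ^ (k - 1) - prod x (e' - {i})) = 0"
      using eq by (simp add: sum_subtractf hg_degree_def)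
  qed
  hence p: "prod x (e - {i}) = b ^ (k - 1)" using e by auto
  have pj: "prod x (e - {i} - {j}) \<le> prod (\<lambda>_. b) (e - {i} - {j})"
    using sub xb by (intro prod_mono) (auto simp: less_imp_le)
  have cj: "card (e - {i} - {j}) = k - 2" using ce e j fe by (simp add: card_Diff_singleton_if)
  have xj0: "0 \<le> x j" using xb[OF jV] by simp
  have "prod x (e - {i}) = x j * prod x (e - {i} - {j})"
    using fe j by (intro prod.remove) auto
  also have "\<dots> \<le> x j * b ^ (k - 2)"
    using pj cj xj0 by (intro mult_left_mono) auto
  also have "x j * b ^ (k - 2) < b * b ^ (k - 2)"
    using xjb bpos by (intro mult_strict_right_mono) auto
  also have "b * b ^ (k - 2) = b ^ (k - 1)"
  proof -
    have "k \<ge> 2" using ce e j fe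
      using card_mono[OF fe, of "{i,j}"] by auto
    hence "k - 1 = Suc (k - 2)" by simp
    thus ?thesis by simp
  qed
  finally show False using p by simp
qed



lemma handshake:
  assumes hg: "k_uniform_hypergraph k V E"
  shows "(\<Sum>i\<in>V. real (hg_degree E i)) = real k * real (card E)"
proof -
  have finV: "finite V" and Esub: "\<And>e. e \<in> E \<Longrightarrow> e \<subseteq> V \<and> card e = k"
    using hg unfolding k_uniform_hypergraph_def by auto
  have finE: "finite E" using finite_E[OF hg] .
  have "(\<Sum>i\<in>V. real (hg_degree E i)) = (\<Sum>i\<in>V. \<Sum>e\<in>E. if i \<in> e then 1 else 0)"
  proof (rule sum.cong[OF refl])
    fix i assume "i \<in> V"
    have "real (hg_degree E i) = (\<Sum>e\<in>{e\<in>E. i \<in> e}. 1)" by (simp add: hg_degree_def)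
    also have "\<dots> = (\<Sum>e\<in>E. if i \<in> e then 1 else 0)"
      by (rule sum.inter_filter[OF finE])
    finally show "real (hg_degree E i) = (\<Sum>e\<in>E. if i \<in> e then 1 else 0)" .
  qed
  also have "\<dots> = (\<Sum>e\<in>E. \<Sum>i\<in>V. if i \<in> e then 1 else 0)" by (rule sum.swap)
  also have "\<dots> = (\<Sum>e\<in>E. real k)"
  proof (rule sum.cong[OF refl])
    fix e assume e: "e \<in> E"
    have "(\<Sum>i\<in>V. if i \<in> e then 1 else 0 :: real) = (\<Sum>i\<in>{i\<in>V. i \<in> e}. 1)"
      by (rule sum.inter_filter[OF finV, symmetric])
    also have "{i\<in>V. i \<in> e} = e" using Esub[OF e] by auto
    finally show "(\<Sum>i\<in>V. if i \<in> e then 1 else 0 :: real) = real k" using Esub[OF e] by simp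
  qed
  also have "\<dots> = real k * real (card E)" by simp
  finally show ?thesis .
qed

lemma holder_k:
  assumes finV: "finite V" and k: "k \<ge> 2" and xpos: "\<And>i. i \<in> V \<Longrightarrow> x i > 0"
    and xs: "(\<Sum>i\<in>V. x i ^ k) = 1" and dpos: "\<And>i. i \<in> V \<Longrightarrow> d i \<ge> 0"
  shows "(\<Sum>i\<in>V. d i * x i) \<le> (\<Sum>i\<in>V. d i powr (real k / (real k - 1))) powr ((real k - 1) / real k)"
proof -
  define p where "p = real k / (real k - 1)"
  define Sd where "Sd = (\<Sum>i\<in>V. d i powr p)"
  define A where "A = Sd powr ((real k - 1) / real k)"
  have kr: "real k \<ge> 2" using k by simp
  have p1: "p > 1" unfolding p_def using kr by (simp add: field_simps)
  have pq: "1 / p + 1 / real k = 1" unfolding p_def using kr by (simp add: field_simps)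
  have Sd0: "Sd \<ge> 0" unfolding Sd_def by (simp add: sum_nonneg)
  show ?thesis
  proof (cases "Sd = 0")
    case True
    hence "\<forall>i\<in>V. d i powr p = 0" unfolding Sd_def using finV by (subst sum_nonneg_eq_0_iff[symmetric]) auto
    hence "\<forall>i\<in>V. d i = 0" by simp
    thus ?thesis by (simp add: True[unfolded Sd_def] p_def[symmetric])
  next
    case False
    hence Apos: "A > 0" unfolding A_def using Sd0 by simp
    have Ap: "A powr p = Sd" unfolding A_def p_def using Sd0 kr by (simp add: powr_powr)
    have "(\<Sum>i\<in>V. (d i / A) * x i) \<le> (\<Sum>i\<in>V. (d i / A) powr p / p + x i powr real k / real k)"
      using p1 kr pq dpos xpos Apos
      by (intro sum_mono Youngs_inequality) (auto simp: less_imp_le)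
    also have "\<dots> = (\<Sum>i\<in>V. d i powr p) / Sd / p + (\<Sum>i\<in>V. x i ^ k) / real k"
      using dpos xpos Apos
      by (simp add: sum.distrib powr_divide Ap sum_divide_distrib powr_realpow)
    also have "\<dots> = 1" using False pq xs unfolding Sd_def by simp
    finally have "(\<Sum>i\<in>V. d i * x i) / A \<le> 1"
      by (simp add: sum_divide_distrib)
    hence "(\<Sum>i\<in>V. d i * x i) \<le> A" using Apos by (simp add: divide_le_eq)
    thus ?thesis unfolding A_def Sd_def p_def .
  qed
qed



lemma path_prop:
  assumes p: "hg_path E vs es" and h: "P (hd vs)"
    and cl: "\<And>i e j. P i \<Longrightarrow> e \<in> E \<Longrightarrow> i \<in> e \<Longrightarrow> j \<in> e \<Longrightarrow> P j"
  shows "P (last vs)"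
proof -
  have len: "length vs = length es + 1" using p unfolding hg_path_def by auto
  have "\<forall>t. t < length vs \<longrightarrow> P (vs ! t)"
  proof (intro allI)
    fix t show "t < length vs \<longrightarrow> P (vs ! t)"
    proof (induction t)
      case 0
      then show ?case using h len by (cases vs) auto
    next
      case (Suc t)
      show ?case
      proof
        assume "Suc t < length vs"
        hence t: "t < length es" using len by simp
        hence "es ! t \<in> E" "vs ! t \<in> es ! t" "vs ! (t+1) \<in> es ! t" using p unfolding hg_path_def by auto
        moreover have "P (vs ! t)" using Suc t len by simp
        ultimately show "P (vs ! Suc t)" using cl by auto
      qed
    qed
  qed
  moreover have "vs \<noteq> []" using len by auto
  ultimately show ?thesis using len by (simp add: last_conv_nth)
qed



theorem theorem3p2:
  fixes V :: "'a set" and E :: "'a set set" and k :: nat and \<alpha> :: real and x :: "'a \<Rightarrow> real"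
  assumes "k \<ge> 2" and "0 \<le> \<alpha>" and "\<alpha> < 1"
    and "k_uniform_hypergraph k V E" and "hg_connected V E"
    and "alpha_perron_vector \<alpha> k V E x"
  defines "xbar \<equiv> Max (x ` V)"
    and "m \<equiv> card E"
    and "\<Delta> \<equiv> hg_max_degree V E"
  shows "(rho_alpha \<alpha> k V E \<le> \<alpha> * real \<Delta> + (1 - \<alpha>) * real k * real m * xbar ^ k)
    \<and> (rho_alpha \<alpha> k V E \<le> \<alpha> * real \<Delta> + (1 - \<alpha>) *
           ((\<Sum>i\<in>V. real (hg_degree E i) powr (real k / (real k - 1))) powr ((real k - 1) / real k))
           * xbar ^ (k - 1))
    \<and> (rho_alpha \<alpha> k V E = \<alpha> * real \<Delta> + (1 - \<alpha>) * real k * real m * xbar ^ k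
           \<longleftrightarrow> hg_regular V E)
    \<and> (rho_alpha \<alpha> k V E = \<alpha> * real \<Delta> + (1 - \<alpha>) *
           ((\<Sum>i\<in>V. real (hg_degree E i) powr (real k / (real k - 1))) powr ((real k - 1) / real k))
           * xbar ^ (k - 1) \<longleftrightarrow> hg_regular V E)"
proof -
  note k = assms(1) and a0 = assms(2) and a1 = assms(3) and hg = assms(4) and con = assms(5) and pv = assms(6)
  define \<rho> where "\<rho> = rho_alpha \<alpha> k V E"
  define d where "d = (\<lambda>i. real (hg_degree E i))"
  define S where "S = (\<lambda>i. \<Sum>e\<in>{e\<in>E. i \<in> e}. prod x (e - {i}))"
  define H where "H = (\<Sum>i\<in>V. real (hg_degree E i) powr (real k / (real k - 1))) powr ((real k - 1) / real k)"
  define D where "D = (\<Sum>i\<in>V. d i * x i ^ k)"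
  define T where "T = (\<Sum>i\<in>V. x i * S i)"
  define W where "W = (\<Sum>i\<in>V. d i * x i)"
  have finV: "finite V" and Esub: "\<And>e. e \<in> E \<Longrightarrow> e \<subseteq> V \<and> card e = k"
    using hg unfolding k_uniform_hypergraph_def by auto
  have xpos: "\<And>i. i \<in> V \<Longrightarrow> x i > 0" and xs: "(\<Sum>i\<in>V. x i ^ k) = 1"
    using pv unfolding alpha_perron_vector_def by auto
  have Vne: "V \<noteq> {}" using xs by auto
  have xle: "\<And>i. i \<in> V \<Longrightarrow> x i \<le> xbar" unfolding xbar_def using finV by auto
  have "xbar \<in> x ` V" unfolding xbar_def using finV Vne by (intro Max_in) auto
  then obtain i0 where i0: "i0 \<in> V" "x i0 = xbar" by auto
  have xbpos: "xbar > 0" using xpos i0 by auto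
  have dle: "\<And>i. i \<in> V \<Longrightarrow> d i \<le> real \<Delta>"
    unfolding d_def \<Delta>_def hg_max_degree_def using finV by auto
  have d0: "\<And>i. d i \<ge> 0" unfolding d_def by simp
  have eig: "\<And>i. i \<in> V \<Longrightarrow> \<rho> * x i ^ (k - 1) = \<alpha> * d i * x i ^ (k - 1) + (1 - \<alpha>) * S i"
    unfolding \<rho>_def d_def S_def using eigen_eq[OF k hg pv] by blast
  have k1: "k \<ge> 1" using k by simp
  have pw: "\<And>y::real. y * y ^ (k - 1) = y ^ k"
    using k1 by (metis Suc_diff_le diff_Suc_1 power_Suc)
  have sumid: "\<rho> = \<alpha> * D + (1 - \<alpha>) * T"
  proof -
    have "\<rho> = (\<Sum>i\<in>V. x i * (\<rho> * x i ^ (k - 1)))"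
    proof -
      have "(\<Sum>i\<in>V. x i * (\<rho> * x i ^ (k - 1))) = \<rho> * (\<Sum>i\<in>V. x i * x i ^ (k - 1))"
        by (simp add: sum_distrib_left algebra_simps)
      also have "(\<Sum>i\<in>V. x i * x i ^ (k - 1)) = 1" using xs pw by simp
      finally show ?thesis by simp
    qed
    also have "\<dots> = (\<Sum>i\<in>V. x i * (\<alpha> * d i * x i ^ (k - 1) + (1 - \<alpha>) * S i))"
      using eig by simp
    also have "\<dots> = (\<Sum>i\<in>V. \<alpha> * (d i * x i ^ k) + (1 - \<alpha>) * (x i * S i))"
      by (rule sum.cong[OF refl]) (simp add: algebra_simps pw[symmetric])
    also have "\<dots> = \<alpha> * D + (1 - \<alpha>) * T"
      unfolding D_def T_def by (simp add: sum.distrib sum_distrib_left)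
    finally show ?thesis .
  qed
  have DleD: "D \<le> real \<Delta>"
  proof -
    have "D \<le> (\<Sum>i\<in>V. real \<Delta> * x i ^ k)"
      unfolding D_def using dle xpos by (intro sum_mono mult_right_mono) (auto simp: less_imp_le)
    also have "\<dots> = real \<Delta>" using xs by (simp add: sum_distrib_left[symmetric])
    finally show ?thesis .
  qed
  have Sle: "\<And>i. i \<in> V \<Longrightarrow> S i \<le> d i * xbar ^ (k - 1)"
    unfolding S_def d_def using S_le[OF hg k1] xle xpos by (meson less_imp_le)
  have TleW: "T \<le> xbar ^ (k - 1) * W"
  proof -
    have "T \<le> (\<Sum>i\<in>V. x i * (d i * xbar ^ (k - 1)))"
      unfolding T_def using Sle xpos by (intro sum_mono mult_left_mono) (auto simp: less_imp_le)
    also have "\<dots> = xbar ^ (k - 1) * W" unfolding W_def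
      by (simp add: sum_distrib_left algebra_simps)
    finally show ?thesis .
  qed
  have hs: "(\<Sum>i\<in>V. d i) = real k * real m" unfolding d_def m_def using handshake[OF hg] .
  have Wle1: "W \<le> xbar * (real k * real m)"
  proof -
    have "W \<le> (\<Sum>i\<in>V. d i * xbar)" unfolding W_def using xle d0 by (intro sum_mono mult_left_mono) auto
    also have "\<dots> = xbar * (real k * real m)" using hs by (simp add: sum_distrib_left[symmetric] mult.commute)
    finally show ?thesis .
  qed
  have Wle2: "W \<le> H" unfolding W_def H_def d_def
    using holder_k[OF finV k xpos xs, of "\<lambda>i. real (hg_degree E i)"] by simp
  have xbk: "xbar ^ (k - 1) * (xbar * (real k * real m)) = real k * real m * xbar ^ k"
    using pw[of xbar] by (simp add: algebra_simps)
  have xbk0: "xbar ^ (k - 1) > 0" using xbpos by simp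
  have gen_bound: "\<And>B. W \<le> B \<Longrightarrow> \<rho> \<le> \<alpha> * real \<Delta> + (1 - \<alpha>) * (xbar ^ (k - 1) * B)"
  proof -
    fix B assume "W \<le> B"
    hence "T \<le> xbar ^ (k - 1) * B" using TleW xbk0 by (meson order_trans mult_left_mono less_imp_le)
    hence "(1 - \<alpha>) * T \<le> (1 - \<alpha>) * (xbar ^ (k - 1) * B)" by (rule mult_left_mono) (use a1 in auto)
    moreover have "\<alpha> * D \<le> \<alpha> * real \<Delta>" using DleD a0 by (rule mult_left_mono)
    ultimately show "\<rho> \<le> \<alpha> * real \<Delta> + (1 - \<alpha>) * (xbar ^ (k - 1) * B)" using sumid by linarith
  qed
  have gen_eq: "\<And>B. W \<le> B \<Longrightarrow> \<rho> = \<alpha> * real \<Delta> + (1 - \<alpha>) * (xbar ^ (k - 1) * B) \<Longrightarrow> T = xbar ^ (k - 1) * W"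
  proof -
    fix B assume WB: "W \<le> B" and eq: "\<rho> = \<alpha> * real \<Delta> + (1 - \<alpha>) * (xbar ^ (k - 1) * B)"
    have "xbar ^ (k - 1) * W \<le> xbar ^ (k - 1) * B" using WB xbk0 by (simp add: mult_left_mono)
    hence "(1 - \<alpha>) * (xbar ^ (k - 1) * W) \<le> (1 - \<alpha>) * (xbar ^ (k - 1) * B)" by (rule mult_left_mono) (use a1 in auto)
    moreover have "\<alpha> * D \<le> \<alpha> * real \<Delta>" using DleD a0 by (rule mult_left_mono)
    ultimately have "(1 - \<alpha>) * (xbar ^ (k - 1) * W) \<le> (1 - \<alpha>) * T" using sumid eq by linarith
    hence "xbar ^ (k - 1) * W \<le> T" using a1 by simp
    thus "T = xbar ^ (k - 1) * W" using TleW by simp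
  qed
  have reg_of_T: "T = xbar ^ (k - 1) * W \<Longrightarrow> hg_regular V E"
  proof -
    assume TW: "T = xbar ^ (k - 1) * W"
    have "(\<Sum>i\<in>V. x i * (d i * xbar ^ (k - 1) - S i)) = 0"
      using TW unfolding T_def W_def by (simp add: algebra_simps sum_subtractf sum_distrib_left)
    hence "\<forall>i\<in>V. x i * (d i * xbar ^ (k - 1) - S i) = 0"
      using finV Sle xpos by (subst sum_nonneg_eq_0_iff[symmetric]) (auto intro!: mult_nonneg_nonneg simp: less_imp_le)
    hence Seq: "\<And>i. i \<in> V \<Longrightarrow> S i = d i * xbar ^ (k - 1)" using xpos by fastforce
    have dr: "\<And>i. i \<in> V \<Longrightarrow> d i = \<rho>"
    proof -
      fix i assume i: "i \<in> V"
      show "d i = \<rho>"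
      proof (cases "d i = 0")
        case True
        hence "\<rho> * x i ^ (k - 1) = 0" using eig[OF i] Seq[OF i] by simp
        thus ?thesis using True xpos[OF i] by simp
      next
        case False
        hence "{e\<in>E. i \<in> e} \<noteq> {}" unfolding d_def hg_degree_def by (metis card.empty of_nat_0)
        then obtain e where e: "e \<in> E" "i \<in> e" by auto
        have "card e \<ge> 2" using Esub[OF e(1)] k by simp
        hence "e \<noteq> {i}" by auto
        then obtain j where j: "j \<in> e" "j \<noteq> i" using e(2) by auto
        have jV: "j \<in> V" using Esub[OF e(1)] j by auto
        have "x i = xbar"
          using S_eq[OF hg k1 jV, of x xbar e i] Seq[OF jV] xpos xle e j
          unfolding S_def d_def by auto
        hence "\<rho> * xbar ^ (k - 1) = d i * xbar ^ (k - 1)" using eig[OF i] Seq[OF i] by (simp add: algebra_simps)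
        thus ?thesis using xbk0 xbpos by auto
      qed
    qed
    show "hg_regular V E" unfolding hg_regular_def using dr unfolding d_def by (metis of_nat_eq_iff)
  qed
  have regular_eq: "hg_regular V E \<Longrightarrow> \<rho> = \<alpha> * real \<Delta> + (1 - \<alpha>) * real k * real m * xbar ^ k
      \<and> \<rho> = \<alpha> * real \<Delta> + (1 - \<alpha>) * H * xbar ^ (k - 1)"
  proof -
    assume reg: "hg_regular V E"
    define dd where "dd = d i0"
    have dg: "\<forall>i\<in>V. hg_degree E i = hg_degree E i0" using reg i0(1) unfolding hg_regular_def by blast
    have dd: "\<And>i. i \<in> V \<Longrightarrow> d i = dd" using dg unfolding d_def dd_def by simp
    have "hg_degree E ` V = (\<lambda>_. hg_degree E i0) ` V" using dg by (intro image_cong) auto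
    also have "\<dots> = {hg_degree E i0}" using i0(1) by (rule image_constant)
    finally have "hg_degree E ` V = {hg_degree E i0}" .
    hence Ddd: "real \<Delta> = dd" unfolding \<Delta>_def hg_max_degree_def dd_def d_def by simp
    have dd0: "dd \<ge> 0" unfolding dd_def using d0 by simp
    define xmin where "xmin = Min (x ` V)"
    have "xmin \<in> x ` V" unfolding xmin_def using finV Vne by (intro Min_in) auto
    then obtain i1 where i1: "i1 \<in> V" "x i1 = xmin" by auto
    have xge: "\<And>i. i \<in> V \<Longrightarrow> xmin \<le> x i" unfolding xmin_def using finV by auto
    have xmpos: "xmin > 0" using xpos i1 by auto
    have xmk0: "xmin ^ (k - 1) > 0" using xmpos by simp
    have r1: "\<rho> \<le> dd"
    proof -
      have "S i0 \<le> dd * xbar ^ (k - 1)" using Sle[OF i0(1)] dd[OF i0(1)] by simp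
      hence "(1 - \<alpha>) * S i0 \<le> (1 - \<alpha>) * (dd * xbar ^ (k - 1))" by (rule mult_left_mono) (use a1 in auto)
      hence "\<rho> * xbar ^ (k - 1) \<le> dd * xbar ^ (k - 1)" using eig[OF i0(1)] i0 dd[OF i0(1)]
        by (simp add: algebra_simps)
      thus ?thesis using xbk0 by simp
    qed
    have r2: "dd \<le> \<rho>"
    proof -
      have "S i1 \<ge> dd * xmin ^ (k - 1)"
        using S_ge[OF hg k1 i1(1), of xmin x] xge xmpos dd[OF i1(1)] unfolding S_def d_def by auto
      hence "(1 - \<alpha>) * S i1 \<ge> (1 - \<alpha>) * (dd * xmin ^ (k - 1))" by (rule mult_left_mono) (use a1 in auto)
      hence "\<rho> * xmin ^ (k - 1) \<ge> dd * xmin ^ (k - 1)" using eig[OF i1(1)] i1 dd[OF i1(1)]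
        by (simp add: algebra_simps)
      thus ?thesis using xmk0 by simp
    qed
    have rdd: "\<rho> = dd" using r1 r2 by simp
    have clo: "\<And>i e j. i \<in> V \<Longrightarrow> x i = xbar \<Longrightarrow> e \<in> E \<Longrightarrow> i \<in> e \<Longrightarrow> j \<in> e \<Longrightarrow> x j = xbar"
    proof -
      fix i e j assume i: "i \<in> V" "x i = xbar" and e: "e \<in> E" "i \<in> e" and j: "j \<in> e"
      have "dd * xbar ^ (k - 1) = \<alpha> * dd * xbar ^ (k - 1) + (1 - \<alpha>) * S i"
        using eig[OF i(1)] i(2) dd[OF i(1)] rdd by simp
      hence "(1 - \<alpha>) * S i = (1 - \<alpha>) * (dd * xbar ^ (k - 1))" by (simp add: algebra_simps)
      hence Si: "S i = d i * xbar ^ (k - 1)" using a1 dd[OF i(1)] by simp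
      show "x j = xbar"
      proof (cases "j = i")
        case True thus ?thesis using i by simp
      next
        case False
        thus ?thesis using S_eq[OF hg k1 i(1), of x xbar e j] Si xpos xle e j
          unfolding S_def d_def by auto
      qed
    qed
    have allx: "\<And>v. v \<in> V \<Longrightarrow> x v = xbar"
    proof -
      fix v assume v: "v \<in> V"
      obtain vs es where p: "hg_path E vs es" "hd vs = i0" "last vs = v"
        using con i0(1) v unfolding hg_connected_def by blast
      have "(\<lambda>i. i \<in> V \<and> x i = xbar) (last vs)"
      proof (rule path_prop[OF p(1)])
        show "hd vs \<in> V \<and> x (hd vs) = xbar" using p i0 by simp
        fix i e j assume "i \<in> V \<and> x i = xbar" "e \<in> E" "i \<in> e" "j \<in> e"
        thus "j \<in> V \<and> x j = xbar" using clo Esub by blast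
      qed
      thus "x v = xbar" using p by simp
    qed
    define n where "n = real (card V)"
    have npos: "n > 0" unfolding n_def using finV Vne by (simp add: card_gt_0_iff)
    have nx: "n * xbar ^ k = 1" using xs allx unfolding n_def by simp
    have km: "real k * real m = n * dd" using hs dd unfolding n_def by simp
    have eq1: "\<rho> = \<alpha> * real \<Delta> + (1 - \<alpha>) * real k * real m * xbar ^ k"
    proof -
      have "(1 - \<alpha>) * real k * real m * xbar ^ k = (1 - \<alpha>) * dd * (n * xbar ^ k)"
        using km by (simp add: algebra_simps)
      thus ?thesis using nx Ddd rdd by (simp add: algebra_simps)
    qed
    have eq2: "\<rho> = \<alpha> * real \<Delta> + (1 - \<alpha>) * H * xbar ^ (k - 1)"
    proof (cases "dd = 0")
      case True
      have "H = 0" unfolding H_def using dd True Vne finV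
        by (simp add: d_def)
      thus ?thesis using True Ddd rdd by simp
    next
      case False
      hence ddp: "dd > 0" using dd0 by simp
      define ex where "ex = (real k - 1) / real k"
      define p where "p = real k / (real k - 1)"
      have kr: "real k \<ge> 2" using k by simp
      have pe: "p * ex = 1" unfolding p_def ex_def using kr by (simp add: field_simps)
      have ke: "real k * ex = real (k - 1)" unfolding ex_def using kr k1 by (simp add: field_simps of_nat_diff)
      have "(\<Sum>i\<in>V. real (hg_degree E i) powr p) = (\<Sum>i\<in>V. dd powr p)"
        using dd unfolding d_def by (intro sum.cong) auto
      hence "H = (n * dd powr p) powr ex" unfolding H_def ex_def[symmetric] p_def[symmetric] n_def
        by simp
      also have "\<dots> = n powr ex * dd" using npos ddp pe by (simp add: powr_mult powr_powr)
      finally have Hv: "H = n powr ex * dd" .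
      have nv: "n = 1 / xbar powr real k" using nx xbpos by (simp add: powr_realpow field_simps)
      have xp: "(xbar ^ k) powr ex = xbar ^ (k - 1)"
      proof -
        have "(xbar ^ k) powr ex = (xbar powr real k) powr ex" using xbpos by (simp add: powr_realpow)
        also have "\<dots> = xbar powr real (k - 1)" using ke by (simp add: powr_powr)
        also have "\<dots> = xbar ^ (k - 1)" using xbpos by (simp add: powr_realpow)
        finally show ?thesis .
      qed
      have "n powr ex = 1 / xbar ^ (k - 1)"
        using xbpos xp by (simp add: nv powr_divide powr_realpow)
      hence "H * xbar ^ (k - 1) = dd" using Hv xbk0 xbpos by simp
      thus ?thesis using Ddd rdd by (simp add: algebra_simps)
    qed
    show ?thesis using eq1 eq2 by simp
  qed
  have e1: "(1 - \<alpha>) * real k * real m * xbar ^ k = (1 - \<alpha>) * (xbar ^ (k - 1) * (xbar * (real k * real m)))"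
    by (subst xbk) (simp add: mult.assoc)
  have e2: "(1 - \<alpha>) * H * xbar ^ (k - 1) = (1 - \<alpha>) * (xbar ^ (k - 1) * H)" by (simp add: algebra_simps)
  have c1: "\<rho> \<le> \<alpha> * real \<Delta> + (1 - \<alpha>) * real k * real m * xbar ^ k"
    unfolding e1 by (rule gen_bound[OF Wle1])
  have c2: "\<rho> \<le> \<alpha> * real \<Delta> + (1 - \<alpha>) * H * xbar ^ (k - 1)"
    unfolding e2 by (rule gen_bound[OF Wle2])
  have c3: "\<rho> = \<alpha> * real \<Delta> + (1 - \<alpha>) * real k * real m * xbar ^ k \<longleftrightarrow> hg_regular V E"
    unfolding e1 using gen_eq[OF Wle1] reg_of_T regular_eq[unfolded e1 e2] by blast
  have c4: "\<rho> = \<alpha> * real \<Delta> + (1 - \<alpha>) * H * xbar ^ (k - 1) \<longleftrightarrow> hg_regular V E"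
    unfolding e2 using gen_eq[OF Wle2] reg_of_T regular_eq[unfolded e1 e2] by blast
  show ?thesis using c1 c2 c3 c4 unfolding \<rho>_def H_def by blast
qed


end
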